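(* Let $p$ be a prime and $F$ a field of characteristic $p$. Let $L\in F[x]$ be a $p$-polynomial of $p$-degree $n$ with no repeated roots, let $E$ be a splitting field of $L$ over $F$, and let $V_L\subseteq E$ be the $\mathbb{F}_p$-space of roots of $L$. Let $P(x)\in F[x]$ be the polynomial with $L(x)/x=P(x^{p-1})$, and let $L_P\in F[x]$ be a $p$-linearized polynomial of smallest degree that is divisible by $P$. Let $\alpha_1,\dots,\alpha_n$ be an $\mathbb{F}_p$-basis of $V_L$. Then every element $\alpha_1^{k_1}\alpha_2^{k_2}\cdots\alpha_n^{k_n}$, where $k_1,\dots,k_n$ are nonnegative integers with $k_1+\cdots+k_n=p-1$, is a root of $L_P$.
   Context: A $p$-polynomial (p-linearized polynomial) of $p$-degree $n$ is $\sum_{i=0}^n a_ix^{p^i}$ with $a_n\neq0$. Since each $p^i-1$ is divisible by $p-1$, $L(x)/x$ is a polynomial in $x^{p-1}$, so $P$ is well defined. *)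

theory Defs
  imports "HOL-Computational_Algebra.Polynomial"
begin

definition field_hom :: "('a::field \<Rightarrow> 'b::field) \<Rightarrow> bool" where
  "field_hom f \<longleftrightarrow> f 0 = 0 \<and> f 1 = 1 \<and>
     (\<forall>x y. f (x + y) = f x + f y) \<and> (\<forall>x y. f (x * y) = f x * f y)"

definition is_subfield :: "'b::field set \<Rightarrow> bool" where
  "is_subfield S \<longleftrightarrow> 0 \<in> S \<and> 1 \<in> S \<and> (\<forall>x\<in>S. \<forall>y\<in>S. x + y \<in> S \<and> x * y \<in> S)
     \<and> (\<forall>x\<in>S. - x \<in> S \<and> inverse x \<in> S)"

definition splits :: "'b::field poly \<Rightarrow> bool" where
  "splits q \<longleftrightarrow> (\<exists>c xs. q = smult c (\<Prod>x\<leftarrow>xs. [:- x, 1:]))"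

(* E (the whole type 'b) is a splitting field of L over F, via the embedding f *)
definition is_splitting_field :: "('a::field \<Rightarrow> 'b::field) \<Rightarrow> 'a poly \<Rightarrow> bool" where
  "is_splitting_field f L \<longleftrightarrow> field_hom f \<and> splits (map_poly f L) \<and>
     (\<forall>S. is_subfield S \<and> range f \<subseteq> S \<and> {x. poly (map_poly f L) x = 0} \<subseteq> S \<longrightarrow> S = UNIV)"

definition p_linearized :: "nat \<Rightarrow> 'a::comm_ring_1 poly \<Rightarrow> bool" where
  "p_linearized p L \<longleftrightarrow> L \<noteq> 0 \<and> (\<forall>i. coeff L i \<noteq> 0 \<longrightarrow> (\<exists>j. i = p ^ j))"

definition p_polynomial :: "nat \<Rightarrow> nat \<Rightarrow> 'a::comm_ring_1 poly \<Rightarrow> bool" where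
  "p_polynomial p n L \<longleftrightarrow> p_linearized p L \<and> degree L = p ^ n"

(* alpha 0, ..., alpha (n-1) is an F_p-basis of V (F_p = prime field, elements of_nat c, c < p) *)
definition Fp_basis :: "nat \<Rightarrow> nat \<Rightarrow> (nat \<Rightarrow> 'b::field) \<Rightarrow> 'b set \<Rightarrow> bool" where
  "Fp_basis p n \<alpha> V \<longleftrightarrow> (\<forall>i<n. \<alpha> i \<in> V) \<and>
     (\<forall>c::nat\<Rightarrow>nat. (\<forall>i<n. c i < p) \<and> (\<Sum>i<n. of_nat (c i) * \<alpha> i) = 0 \<longrightarrow> (\<forall>i<n. c i = 0)) \<and>
     (\<forall>v\<in>V. \<exists>c::nat\<Rightarrow>nat. (\<forall>i<n. c i < p) \<and> v = (\<Sum>i<n. of_nat (c i) * \<alpha> i))"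

end

theory Submission
  imports Defs "HOL-Computational_Algebra.Primes"
begin

lemma binom_not_dvd:
  assumes "prime p" "K < p" "j \<le> K"
  shows "\<not> p dvd (K choose j)"
proof
  assume "p dvd (K choose j)"
  hence "p dvd fact K" using binomial_fact_lemma[OF assms(3)]
    by (metis dvd_mult)
  thus False using prime_dvd_fact_iff[OF assms(1)] assms(2) by simp
qed

lemma core:
  fixes l :: "'e::field \<Rightarrow> 'e" and V :: "'e set" and p :: nat
  assumes pr: "prime p" and ch: "CHAR('e) = p"
  and add: "\<And>x y. l (x + y) = l x + l y"
  and closed: "\<And>u w s. u \<in> V \<Longrightarrow> w \<in> V \<Longrightarrow> u + of_nat s * w \<in> V"
  and base: "\<And>v. v \<in> V \<Longrightarrow> l (v ^ (p - 1)) = 0"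
  shows "(\<forall>i\<le>m. u i \<in> V) \<Longrightarrow> (\<Sum>i<Suc m. k i) = p - 1 \<Longrightarrow> l (\<Prod>i<Suc m. u i ^ k i) = 0"
proof (induction m arbitrary: u k)
  case 0 thus ?case using base by simp
next
  case (Suc m)
  define K where "K = k m + k (Suc m)"
  define A where "A = (\<Prod>i<m. u i ^ k i)"
  define w where "w = u (Suc m)"
  define B where "B j = A * w ^ j * u m ^ (K - j)" for j
  define c where "c j = of_nat (K choose j) * l (B j)" for j
  define q where "q = (\<Sum>j\<le>K. monom (c j) j)"
  have l0: "l 0 = 0" using add[of 0 0] by (metis add.right_neutral add_left_cancel)
  have lsum: "l (sum g S) = sum (\<lambda>x. l (g x)) S" for g :: "nat \<Rightarrow> 'e" and S
    by (induction S rule: infinite_finite_induct) (auto simp: l0 add)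
  have lsmul: "l (of_nat c * x) = of_nat c * l x" for c x
    by (induction c) (auto simp: l0 add distrib_right)
  have Ksum: "(\<Sum>i<Suc (Suc m). k i) = (\<Sum>i<m. k i) + K"
    by (simp add: K_def)
  have Kle: "K < p" using Suc.prems(2) Ksum prime_gt_1_nat[OF pr] by linarith
  have coeffq: "coeff q n = (if n \<le> K then c n else 0)" for n
    by (simp add: q_def coeff_sum coeff_monom)
  have polyq: "poly q x = (\<Sum>j\<le>K. c j * x ^ j)" for x
    by (simp add: q_def poly_sum poly_monom)
  have roots: "poly q (of_nat s) = 0" if "s < p" for s
  proof -
    define u' where "u' = u(m := u m + of_nat s * w)"
    define k' where "k' = k(m := K)"
    have "\<forall>i\<le>m. u' i \<in> V" using Suc.prems(1) closed by (auto simp: u'_def w_def)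
    moreover have "(\<Sum>i<m. k' i) = (\<Sum>i<m. k i)"
      by (rule sum.cong) (auto simp: k'_def)
    hence "(\<Sum>i<Suc m. k' i) = p - 1"
      using Suc.prems(2) Ksum by (simp add: k'_def)
    ultimately have "l (\<Prod>i<Suc m. u' i ^ k' i) = 0" using Suc.IH by blast
    moreover have "(\<Prod>i<m. u' i ^ k' i) = A"
      unfolding A_def by (rule prod.cong) (auto simp: u'_def k'_def)
    hence "(\<Prod>i<Suc m. u' i ^ k' i) = A * (of_nat s * w + u m) ^ K"
      by (simp add: u'_def k'_def add.commute)
    moreover have "A * (of_nat s * w + u m) ^ K = (\<Sum>j\<le>K. of_nat ((K choose j) * s ^ j) * B j)"
      by (simp add: binomial_ring sum_distrib_left B_def power_mult_distrib mult_ac)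
    moreover have "l (\<Sum>j\<le>K. of_nat ((K choose j) * s ^ j) * B j) = (\<Sum>j\<le>K. of_nat ((K choose j) * s ^ j) * l (B j))"
      by (simp only: lsum lsmul)
    ultimately have "(\<Sum>j\<le>K. of_nat ((K choose j) * s ^ j) * l (B j)) = 0"
      by metis
    thus ?thesis by (simp add: polyq c_def mult_ac)
  qed
  have "q = 0"
  proof (rule ccontr)
    assume "q \<noteq> 0"
    have inj: "inj_on (of_nat :: nat \<Rightarrow> 'e) {..<p}"
    proof
      fix a b assume ab: "a \<in> {..<p}" "b \<in> {..<p}" "(of_nat a :: 'e) = of_nat b"
      show "a = b"
      proof (rule ccontr)
        assume "a \<noteq> b"
        then consider "a < b" | "b < a" by linarith
        thus False
        proof cases
          case 1
          have "(of_nat b :: 'e) = of_nat a + of_nat (b - a)" using 1 by (simp flip: of_nat_add)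
          hence "(of_nat (b - a) :: 'e) = 0" using ab by simp
          hence "p dvd b - a" using ch by (simp add: of_nat_eq_0_iff_char_dvd)
          thus False using 1 ab by (auto dest: dvd_imp_le)
        next
          case 2
          have "(of_nat a :: 'e) = of_nat b + of_nat (a - b)" using 2 by (simp flip: of_nat_add)
          hence "(of_nat (a - b) :: 'e) = 0" using ab by simp
          hence "p dvd a - b" using ch by (simp add: of_nat_eq_0_iff_char_dvd)
          thus False using 2 ab by (auto dest: dvd_imp_le)
        qed
      qed
    qed
    have "p = card ((of_nat :: nat \<Rightarrow> 'e) ` {..<p})" using card_image[OF inj] by simp
    also have "\<dots> \<le> card {x. poly q x = 0}"
      by (intro card_mono poly_roots_finite \<open>q \<noteq> 0\<close>) (auto intro: roots)
    also have "\<dots> \<le> degree q" by (rule card_poly_roots_bound[OF \<open>q \<noteq> 0\<close>])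
    also have "\<dots> \<le> K" by (rule degree_le) (simp add: coeffq)
    finally show False using Kle by simp
  qed
  hence "c (k (Suc m)) = 0" using coeffq[of "k (Suc m)"] by (simp add: K_def)
  moreover have "(of_nat (K choose k (Suc m)) :: 'e) \<noteq> 0"
    using binom_not_dvd[OF pr Kle, of "k (Suc m)"] ch by (simp add: of_nat_eq_0_iff_char_dvd K_def)
  ultimately have "l (B (k (Suc m))) = 0" by (simp add: c_def)
  moreover have "B (k (Suc m)) = (\<Prod>i<Suc (Suc m). u i ^ k i)"
    by (simp add: B_def A_def w_def K_def mult_ac)
  ultimately show ?case by simp
qed

lemma map_poly_add_hom:
  assumes "f 0 = 0" "\<And>x y. f (x + y) = f x + f y"
  shows "map_poly f (p + q) = map_poly f p + map_poly f q"
  by (intro poly_eqI) (simp add: coeff_map_poly assms)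

lemma map_poly_mult_hom:
  fixes f :: "'a::comm_ring_1 \<Rightarrow> 'b::comm_ring_1"
  assumes f0: "f 0 = 0" and fa: "\<And>x y. f (x + y) = f x + f y" and fm: "\<And>x y. f (x * y) = f x * f y"
  shows "map_poly f (p * q) = map_poly f p * map_poly f q"
proof (induction p)
  case 0 thus ?case by simp
next
  case (pCons a p)
  show ?case
    by (simp add: mult_pCons_left map_poly_add_hom[of f, OF f0 fa] map_poly_smult[of f, OF f0 fm]
          map_poly_pCons[of f, OF f0] pCons.IH f0)
qed

lemma map_poly_pcompose_hom:
  fixes f :: "'a::comm_ring_1 \<Rightarrow> 'b::comm_ring_1"
  assumes f0: "f 0 = 0" and fa: "\<And>x y. f (x + y) = f x + f y" and fm: "\<And>x y. f (x * y) = f x * f y"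
  shows "map_poly f (pcompose p q) = pcompose (map_poly f p) (map_poly f q)"
proof (induction p)
  case 0 thus ?case by simp
next
  case (pCons a p)
  show ?case
    by (simp add: pcompose_pCons map_poly_add_hom[of f, OF f0 fa] map_poly_mult_hom[OF f0 fa fm]
          map_poly_pCons[of f, OF f0] pCons.IH f0)
qed

lemma lin_additive:
  fixes g :: "'e::field poly"
  assumes pr: "prime p" and ch: "CHAR('e) = p" and lin: "\<And>i. coeff g i \<noteq> 0 \<Longrightarrow> \<exists>j. i = p ^ j"
  shows "poly g (x + y) = poly g x + poly g y"
proof -
  have t: "coeff g i * (x+y)^i = coeff g i * x^i + coeff g i * y^i" for i
  proof (cases "coeff g i = 0")
    case False
    then obtain j where "i = p ^ j" using lin by blast
    hence "(x+y)^i = x^i + y^i" using freshmans_dream'[of i j x y] pr ch by simp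
    thus ?thesis by (simp add: distrib_left)
  qed simp
  show ?thesis by (simp add: poly_altdef t sum.distrib)
qed

lemma additive_smul:
  fixes l :: "'e::field \<Rightarrow> 'e"
  assumes add: "\<And>x y. l (x + y) = l x + l y"
  shows "l (of_nat c * x) = of_nat c * l x"
proof -
  have l0: "l 0 = 0" using add[of 0 0] by (metis add.right_neutral add_left_cancel)
  show ?thesis by (induction c) (auto simp: l0 add distrib_right)
qed

theorem lemma5p1:
  fixes p n :: nat
    and L P LP :: "'a::field poly"
    and f :: "'a \<Rightarrow> 'e::field"
    and \<alpha> :: "nat \<Rightarrow> 'e"
  assumes "prime p"
    and "CHAR('a) = p"
    and "p_polynomial p n L"
    and "rsquarefree (map_poly f L)"
    and "is_splitting_field f L"
    and "L = monom 1 1 * pcompose P (monom 1 (p - 1))"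
    and "p_linearized p LP" and "P dvd LP"
    and "\<And>Q. p_linearized p Q \<Longrightarrow> P dvd Q \<Longrightarrow> degree LP \<le> degree Q"
    and "Fp_basis p n \<alpha> {x. poly (map_poly f L) x = 0}"
  shows "\<forall>k::nat \<Rightarrow> nat. (\<Sum>i<n. k i) = p - 1 \<longrightarrow>
           poly (map_poly f LP) (\<Prod>i<n. \<alpha> i ^ k i) = 0"
proof (intro allI impI)
  fix k :: "nat \<Rightarrow> nat"
  assume ksum: "(\<Sum>i<n. k i) = p - 1"
  note pr = assms(1)
  have fh: "field_hom f" using assms(5) by (simp add: is_splitting_field_def)
  have f0: "f 0 = 0" and f1: "f 1 = 1" and fa: "\<And>x y. f (x + y) = f x + f y"
    and fm: "\<And>x y. f (x * y) = f x * f y" using fh by (auto simp: field_hom_def)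
  have finj: "f x = 0 \<Longrightarrow> x = 0" for x
  proof (rule ccontr)
    assume "f x = 0" "x \<noteq> 0"
    have "f 1 = f x * f (inverse x)" using fm[of x "inverse x"] \<open>x \<noteq> 0\<close> by simp
    thus False using \<open>f x = 0\<close> f1 by simp
  qed
  have fnat: "f (of_nat m) = of_nat m" for m
    by (induction m) (simp_all add: f0 f1 fa)
  have ch: "CHAR('e) = p"
  proof (rule CHAR_eqI)
    show "(of_nat p :: 'e) = 0" using assms(2) f0 by (metis fnat of_nat_CHAR)
  next
    fix x assume "(of_nat x :: 'e) = 0"
    hence "(of_nat x :: 'a) = 0" using fnat finj by metis
    thus "p dvd x" using assms(2) by (simp add: of_nat_eq_0_iff_char_dvd)
  qed
  have linmap: "coeff (map_poly f Q) i \<noteq> 0 \<Longrightarrow> \<exists>j. i = p ^ j" if "p_linearized p Q" for Q i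
    using that by (metis p_linearized_def coeff_map_poly f0)
  define l where "l = poly (map_poly f LP)"
  define V where "V = {x. poly (map_poly f L) x = 0}"
  have ladd: "l (x + y) = l x + l y" for x y
    unfolding l_def by (rule lin_additive[OF pr ch linmap[OF assms(7)]])
  have Ladd: "poly (map_poly f L) (x + y) = poly (map_poly f L) x + poly (map_poly f L) y" for x y
    using assms(3) by (intro lin_additive[OF pr ch linmap]) (auto simp: p_polynomial_def)
  have closed: "u + of_nat s * w \<in> V" if "u \<in> V" "w \<in> V" for u w s
    using that additive_smul[of "poly (map_poly f L)", OF Ladd] by (simp add: V_def Ladd)
  have evL: "poly (map_poly f L) v = v * poly (map_poly f P) (v ^ (p - 1))" for v
    by (simp add: assms(6) map_poly_mult_hom[OF f0 fa fm] map_poly_pcompose_hom[OF f0 fa fm]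
        map_poly_monom f0 f1 poly_pcompose poly_monom)
  obtain R where R: "LP = P * R" using assms(8) by blast
  have l0: "l 0 = 0" using ladd[of 0 0] by (metis add.right_neutral add_left_cancel)
  have base: "l (v ^ (p - 1)) = 0" if "v \<in> V" for v
  proof (cases "v = 0")
    case True
    have "p - 1 \<noteq> 0" using prime_gt_1_nat[OF pr] by simp
    hence "(v::'e) ^ (p - 1) = 0" using True by (metis zero_power neq0_conv)
    thus ?thesis using l0 by (simp only:)
  next
    case False
    hence "poly (map_poly f P) (v ^ (p - 1)) = 0" using that evL by (simp add: V_def)
    thus ?thesis by (simp add: l_def R map_poly_mult_hom[OF f0 fa fm])
  qed
  have "n \<noteq> 0"
  proof
    assume "n = 0"
    thus False using ksum prime_gt_1_nat[OF pr] by simp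
  qed
  then obtain m where n: "n = Suc m" by (cases n) auto
  have "\<forall>i\<le>m. \<alpha> i \<in> V" using assms(10) n by (auto simp: Fp_basis_def V_def)
  from core[OF pr ch ladd closed base this] ksum n
  show "poly (map_poly f LP) (\<Prod>i<n. \<alpha> i ^ k i) = 0" by (simp add: l_def)
qed

end
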